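(* Let $\mathcal{F}$ be a finite set of graphs. For every integer $T>0$ and real $\lambda>0$: (i) with $r=\sqrt{(T+1)n}$ and $n\ge r^2/\lambda^2$, $\mathsf{VC}\text{-}\mathsf{dim}\big(\mathbb{H}_{r,\lambda}(\mathcal{E}_{\mathsf{WLOA},\mathcal{F}}(n,d_T))\big)\in\Theta(r^2/\lambda^2)$; (ii) with $r=\sqrt{T/(T+1)}$ and $n\ge r^2/\lambda^2$, $\mathsf{VC}\text{-}\mathsf{dim}\big(\mathbb{H}_{1,\lambda}(\overline{\mathcal{E}}_{\mathsf{WLOA},\mathcal{F}}(n,d_T))\big)\in\Theta(1/\lambda^2)$.
   Context: $\mathcal{G}_n$ is the set of (unlabeled, simple, undirected) graphs on $n$ vertices. $1$-WL$_{\mathcal{F}}$ colouring: $C^{1,\mathcal{F}}_0(v)=(\ell_F(v))_{F\in\mathcal{F}}$ with $\ell_F(v)=1$ if $v$ lies in some $X\subseteq V(G)$ with $G[X]$ isomorphic to $F$, else $0$; $C^{1,\mathcal{F}}_t(v)=\mathsf{RELABEL}(C^{1,\mathcal{F}}_{t-1}(v),\{\!\{C^{1,\mathcal{F}}_{t-1}(u):u\in N(v)\}\!\})$ with a fixed injective $\mathsf{RELABEL}$ shared by all graphs; $\Sigma_t$ is the set of round-$t$ colours over $\mathcal{G}_n$, and $\phi_{\mathcal{F},t}(G)_c$ the number of vertices of $G$ with colour $c$ at round $t$. $\phi^{(T)}_{\mathsf{WLOA},\mathcal{F}}(G)\in\{0,1\}^{d_T}$ has a coordinate for each $(t,c,j)$,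 $t\in\{0,\dots,T\}$, $c\in\Sigma_t$, $j\in\{1,\dots,n\}$, equal to $1$ iff $\phi_{\mathcal{F},t}(G)_c\ge j$; $\overline{\phi^{(T)}_{\mathsf{WLOA},\mathcal{F}}}$ is its unit-norm normalisation; $\mathcal{E}_{\mathsf{WLOA},\mathcal{F}}(n,d_T)=\{\phi^{(T)}_{\mathsf{WLOA},\mathcal{F}}\}$, $\overline{\mathcal{E}}_{\mathsf{WLOA},\mathcal{F}}(n,d_T)=\{\overline{\phi^{(T)}_{\mathsf{WLOA},\mathcal{F}}}\}$. A sample is $(r,\lambda)$-separable if its points lie in a ball of radius $r$ and the distance between the convex hulls of the two classes is at least $2\lambda$. $\mathbb{H}_{r,\lambda}(\mathcal{E})$: partial concepts $h:\mathcal{G}_n\to\{0,1,\star\}$ such that every finite list of graphs with $h\ne\star$, labelled by $h$ and embedded by some $\mathrm{emb}\in\mathcal{E}$, is $(r,\lambda)$-separable. VC dimension: largest size of a shattered set. *)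

theory Defs
  imports "HOL-Analysis.Analysis" "HOL-Library.Multiset"
begin

definition graphs :: "nat \<Rightarrow> (nat \<times> nat) set set" where
  "graphs n = {E. E \<subseteq> {0..<n} \<times> {0..<n} \<and> sym E \<and> irrefl E}"

definition graph_iso :: "nat \<Rightarrow> (nat \<times> nat) set \<Rightarrow> (nat \<times> nat) set \<Rightarrow> bool" where
  "graph_iso n E1 E2 \<longleftrightarrow> (\<exists>f. bij_betw f {0..<n} {0..<n} \<and>
      (\<forall>a<n. \<forall>b<n. (a, b) \<in> E1 \<longleftrightarrow> (f a, f b) \<in> E2))"

definition iso_rel :: "nat \<Rightarrow> ((nat \<times> nat) set \<times> (nat \<times> nat) set) set" where
  "iso_rel n = {(E1, E2). E1 \<in> graphs n \<and> E2 \<in> graphs n \<and> graph_iso n E1 E2}"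

definition Gn :: "nat \<Rightarrow> (nat \<times> nat) set set set" where
  "Gn n = graphs n // iso_rel n"

text \<open>A pattern graph F is a pair (k, EF) with EF a graph on {0..<k}.
  l_F(v) = 1 iff v lies in some X \<subseteq> V(G) with G[X] isomorphic to F.\<close>
definition occurs :: "nat \<Rightarrow> (nat \<times> nat) set \<Rightarrow> nat \<times> (nat \<times> nat) set \<Rightarrow> nat \<Rightarrow> bool" where
  "occurs n E F v \<longleftrightarrow> (\<exists>X f. X \<subseteq> {0..<n} \<and> v \<in> X \<and> bij_betw f {0..<fst F} X \<and>
      (\<forall>a<fst F. \<forall>b<fst F. (a, b) \<in> snd F \<longleftrightarrow> (f a, f b) \<in> E))"

text \<open>Colours: the injective RELABEL shared by all graphs is realised canonically by
  the free datatype constructors (initial colour = the indicator vector (l_F(v))_F,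
  represented by its support; later colours = pair of previous colour and multiset
  of neighbour colours).\<close>
datatype wlcol = Col0 "(nat \<times> (nat \<times> nat) set) set" | ColS wlcol "wlcol multiset"

primrec wl :: "(nat \<times> (nat \<times> nat) set) set \<Rightarrow> nat \<Rightarrow> (nat \<times> nat) set \<Rightarrow> nat \<Rightarrow> nat \<Rightarrow> wlcol" where
  "wl Fs n E 0 v = Col0 {F \<in> Fs. occurs n E F v}"
| "wl Fs n E (Suc t) v = ColS (wl Fs n E t v) (image_mset (wl Fs n E t) (mset_set {u. (v, u) \<in> E}))"

definition Sigma :: "(nat \<times> (nat \<times> nat) set) set \<Rightarrow> nat \<Rightarrow> nat \<Rightarrow> wlcol set" where
  "Sigma Fs n t = {wl Fs n E t v | E v. E \<in> graphs n \<and> v < n}"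

definition colcount :: "(nat \<times> (nat \<times> nat) set) set \<Rightarrow> nat \<Rightarrow> (nat \<times> nat) set \<Rightarrow> nat \<Rightarrow> wlcol \<Rightarrow> nat" where
  "colcount Fs n E t c = card {v. v < n \<and> wl Fs n E t v = c}"

text \<open>Coordinate set of R^{d_T}: triples (t, c, j).\<close>
definition coords :: "(nat \<times> (nat \<times> nat) set) set \<Rightarrow> nat \<Rightarrow> nat \<Rightarrow> (nat \<times> wlcol \<times> nat) set" where
  "coords Fs n T = {(t, c, j). t \<le> T \<and> c \<in> Sigma Fs n t \<and> 1 \<le> j \<and> j \<le> n}"

definition phi_lab :: "(nat \<times> (nat \<times> nat) set) set \<Rightarrow> nat \<Rightarrow> nat \<Rightarrow> (nat \<times> nat) set \<Rightarrow> nat \<times> wlcol \<times> nat \<Rightarrow> real" where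
  "phi_lab Fs n T E = (\<lambda>(t, c, j). if (t, c, j) \<in> coords Fs n T \<and> j \<le> colcount Fs n E t c then 1 else 0)"

definition phi_WLOA :: "(nat \<times> (nat \<times> nat) set) set \<Rightarrow> nat \<Rightarrow> nat \<Rightarrow> (nat \<times> nat) set set \<Rightarrow> nat \<times> wlcol \<times> nat \<Rightarrow> real" where
  "phi_WLOA Fs n T X = phi_lab Fs n T (SOME E. E \<in> X)"

definition enorm :: "'i set \<Rightarrow> ('i \<Rightarrow> real) \<Rightarrow> real" where
  "enorm I x = sqrt (\<Sum>i\<in>I. (x i)\<^sup>2)"

definition phi_WLOA_norm :: "(nat \<times> (nat \<times> nat) set) set \<Rightarrow> nat \<Rightarrow> nat \<Rightarrow> (nat \<times> nat) set set \<Rightarrow> nat \<times> wlcol \<times> nat \<Rightarrow> real" where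
  "phi_WLOA_norm Fs n T X = (\<lambda>i. phi_WLOA Fs n T X i / enorm (coords Fs n T) (phi_WLOA Fs n T X))"

definition E_WLOA where "E_WLOA Fs n T = {phi_WLOA Fs n T}"
definition E_WLOA_norm where "E_WLOA_norm Fs n T = {phi_WLOA_norm Fs n T}"

definition conv_fin :: "('i \<Rightarrow> real) set \<Rightarrow> ('i \<Rightarrow> real) set" where
  "conv_fin P = {y. \<exists>a. (\<forall>p\<in>P. 0 \<le> a p) \<and> (\<Sum>p\<in>P. a p) = 1 \<and> y = (\<lambda>i. \<Sum>p\<in>P. a p * p i)}"

text \<open>(r,lambda)-separable sample: all points in the (origin-centred, closed) ball of radius r
  and distance between the convex hulls of the two classes at least 2 lambda
  (i.e. every pair of points of the two hulls is at distance at least 2 lambda).\<close>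
definition separable :: "'i set \<Rightarrow> real \<Rightarrow> real \<Rightarrow> (('i \<Rightarrow> real) \<times> bool) list \<Rightarrow> bool" where
  "separable I r lam S \<longleftrightarrow>
     (\<forall>(x, y)\<in>set S. enorm I x \<le> r) \<and>
     (\<forall>p\<in>conv_fin {x. (x, True) \<in> set S}. \<forall>q\<in>conv_fin {x. (x, False) \<in> set S}.
         2 * lam \<le> enorm I (\<lambda>i. p i - q i))"

text \<open>Partial concepts D -> {0,1,*}: None = *, Some False = 0, Some True = 1.\<close>
definition Hmargin :: "'a set \<Rightarrow> 'i set \<Rightarrow> real \<Rightarrow> real \<Rightarrow> ('a \<Rightarrow> 'i \<Rightarrow> real) set \<Rightarrow> ('a \<Rightarrow> bool option) set" where
  "Hmargin D I r lam Emb = {h. (\<forall>x. x \<notin> D \<longrightarrow> h x = None) \<and>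
      (\<forall>xs. set xs \<subseteq> D \<and> (\<forall>x\<in>set xs. h x \<noteq> None) \<longrightarrow>
         (\<exists>emb\<in>Emb. separable I r lam (map (\<lambda>x. (emb x, the (h x))) xs)))}"

definition shatters :: "('a \<Rightarrow> bool option) set \<Rightarrow> 'a set \<Rightarrow> bool" where
  "shatters H S \<longleftrightarrow> (\<forall>f. \<exists>h\<in>H. \<forall>x\<in>S. h x = Some (f x))"

definition vcdim :: "'a set \<Rightarrow> ('a \<Rightarrow> bool option) set \<Rightarrow> nat" where
  "vcdim D H = Max {card S | S. S \<subseteq> D \<and> shatters H S}"

end

theory Submission
  imports Defs
begin

lemma sum_SS:
  assumes "finite A" "\<And>t. t\<in>A \<Longrightarrow> finite (B t)" "\<And>t c. t\<in>A \<Longrightarrow> c\<in>B t \<Longrightarrow> finite (C t c)"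
  shows "(\<Sum>i\<in>(SIGMA t:A. SIGMA c:B t. C t c). F i) = (\<Sum>t\<in>A. \<Sum>c\<in>B t. \<Sum>j\<in>C t c. F (t,c,j))"
proof -
  have "(\<Sum>i\<in>(SIGMA t:A. SIGMA c:B t. C t c). F i) = (\<Sum>(t,p)\<in>(SIGMA t:A. SIGMA c:B t. C t c). F (t,p))"
    by simp
  also have "\<dots> = (\<Sum>t\<in>A. \<Sum>p\<in>(SIGMA c:B t. C t c). F (t,p))"
    by (rule sum.Sigma[symmetric]) (use assms in auto)
  also have "\<dots> = (\<Sum>t\<in>A. \<Sum>c\<in>B t. \<Sum>j\<in>C t c. F (t,c,j))"
  proof (rule sum.cong[OF refl])
    fix t assume t: "t \<in> A"
    have "(\<Sum>p\<in>(SIGMA c:B t. C t c). F (t,p)) = (\<Sum>(c,j)\<in>(SIGMA c:B t. C t c). F (t,c,j))"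
      by (simp add: case_prod_beta')
    also have "\<dots> = (\<Sum>c\<in>B t. \<Sum>j\<in>C t c. F (t,c,j))"
      by (rule sum.Sigma[symmetric]) (use assms t in auto)
    finally show "(\<Sum>p\<in>(SIGMA c:B t. C t c). F (t,p)) = (\<Sum>c\<in>B t. \<Sum>j\<in>C t c. F (t,c,j))" .
  qed
  finally show ?thesis .
qed

lemma finite_graphs: "finite (graphs n)"
proof -
  have "graphs n \<subseteq> Pow ({0..<n} \<times> {0..<n})" by (auto simp: graphs_def)
  thus ?thesis by (rule finite_subset) auto
qed

lemma finite_Gn: "finite (Gn n)"
  unfolding Gn_def by (rule finite_quotient[OF finite_graphs]) (auto simp: iso_rel_def)

definition nbr :: "(nat \<times> nat) set \<Rightarrow> nat \<Rightarrow> nat set" where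
  "nbr E v = {u. (v, u) \<in> E}"

definition deg :: "(nat \<times> nat) set \<Rightarrow> nat \<Rightarrow> nat" where
  "deg E v = card (nbr E v)"

lemma nbr_sub: "E \<in> graphs n \<Longrightarrow> nbr E v \<subseteq> {0..<n}"
  by (auto simp: graphs_def nbr_def)

lemma finite_nbr: "E \<in> graphs n \<Longrightarrow> finite (nbr E v)"
  by (rule finite_subset[OF nbr_sub]) auto

primrec dg :: "nat \<Rightarrow> wlcol \<Rightarrow> nat" where
  "dg 0 c = 0"
| "dg (Suc t) c = (case c of Col0 _ \<Rightarrow> 0 | ColS c' M \<Rightarrow> if t = 0 then size M else dg t c')"

lemma dg_wl: "E \<in> graphs n \<Longrightarrow> t \<ge> 1 \<Longrightarrow> dg t (wl Fs n E t v) = deg E v"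
proof (induction t)
  case 0 then show ?case by simp
next
  case (Suc t)
  show ?case
  proof (cases "t = 0")
    case True
    then show ?thesis using finite_nbr[OF Suc.prems(1)]
      by (simp add: deg_def nbr_def)
  next
    case False
    then have "dg t (wl Fs n E t v) = deg E v" using Suc.IH Suc.prems by simp
    then show ?thesis using False by simp
  qed
qed

lemma finite_Sigma: "finite (Sigma Fs n t)"
proof -
  have "Sigma Fs n t = (\<lambda>(E, v). wl Fs n E t v) ` (graphs n \<times> {..<n})"
    by (auto simp: Sigma_def)
  thus ?thesis using finite_graphs by simp
qed

lemma wl_in_Sigma: "E \<in> graphs n \<Longrightarrow> v < n \<Longrightarrow> wl Fs n E t v \<in> Sigma Fs n t"
  by (auto simp: Sigma_def)

lemma colour_sum:
  assumes "E \<in> graphs n"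
  shows "(\<Sum>c\<in>{c\<in>Sigma Fs n t. P c}. colcount Fs n E t c) = card {v. v < n \<and> P (wl Fs n E t v)}"
proof -
  let ?V = "{v. v < n \<and> P (wl Fs n E t v)}"
  have fin: "finite ?V" by simp
  have "card ?V = (\<Sum>c\<in>(wl Fs n E t) ` ?V. card {v\<in>?V. wl Fs n E t v = c})"
  proof -
    have "(\<Sum>x\<in>?V. 1::nat) = (\<Sum>c\<in>(wl Fs n E t) ` ?V. \<Sum>x\<in>{v\<in>?V. wl Fs n E t v = c}. 1)"
      by (rule sum.image_gen[OF fin])
    then show ?thesis by simp
  qed
  also have "\<dots> = (\<Sum>c\<in>{c\<in>Sigma Fs n t. P c}. card {v\<in>?V. wl Fs n E t v = c})"
  proof (rule sum.mono_neutral_left)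
    show "finite {c \<in> Sigma Fs n t. P c}" using finite_Sigma by simp
    show "wl Fs n E t ` ?V \<subseteq> {c \<in> Sigma Fs n t. P c}" using wl_in_Sigma[OF assms] by auto
    show "\<forall>i\<in>{c \<in> Sigma Fs n t. P c} - wl Fs n E t ` ?V. card {v \<in> ?V. wl Fs n E t v = i} = 0"
      by auto
  qed
  also have "\<dots> = (\<Sum>c\<in>{c\<in>Sigma Fs n t. P c}. colcount Fs n E t c)"
    by (rule sum.cong) (auto simp: colcount_def intro!: arg_cong[where f=card])
  finally show ?thesis by simp
qed

lemma colcount_le: "colcount Fs n E t c \<le> n"
proof -
  have "colcount Fs n E t c \<le> card {..<n}" unfolding colcount_def by (rule card_mono) auto
  thus ?thesis by simp
qed

lemma coords_eq: "coords Fs n T = (SIGMA t:{..T}. SIGMA c:Sigma Fs n t. {1..n})"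
  by (auto simp: coords_def)

lemma finite_coords: "finite (coords Fs n T)"
  unfolding coords_eq using finite_Sigma by (auto intro!: finite_SigmaI)

lemma phi_sq_sum:
  assumes "E \<in> graphs n"
  shows "(\<Sum>i\<in>{i\<in>coords Fs n T. Q (fst i) (fst (snd i))}. (phi_lab Fs n T E i)\<^sup>2)
     = (\<Sum>t\<le>T. real (card {v. v < n \<and> Q t (wl Fs n E t v)}))"
proof -
  have "(\<Sum>i\<in>{i\<in>coords Fs n T. Q (fst i) (fst (snd i))}. (phi_lab Fs n T E i)\<^sup>2)
      = (\<Sum>i\<in>coords Fs n T. (if Q (fst i) (fst (snd i)) then (phi_lab Fs n T E i)\<^sup>2 else 0))"
    using finite_coords by (simp add: sum.inter_filter)
  also have "\<dots> = (\<Sum>t\<le>T. \<Sum>c\<in>Sigma Fs n t. \<Sum>j\<in>{1..n}.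
       (if Q t c \<and> j \<le> colcount Fs n E t c then 1 else 0))"
    unfolding coords_eq
    apply (subst sum_SS)
    using finite_Sigma apply auto[3]
    apply (intro sum.cong refl)
    apply (simp add: phi_lab_def coords_def)
    done
  also have "\<dots> = (\<Sum>t\<le>T. \<Sum>c\<in>Sigma Fs n t. (if Q t c then real (colcount Fs n E t c) else 0))"
  proof (intro sum.cong refl)
    fix t c
    have "{j\<in>{1..n}. j \<le> colcount Fs n E t c} = {1..colcount Fs n E t c}"
      using colcount_le[of Fs n E t c] by auto
    then show "(\<Sum>j\<in>{1..n}. (if Q t c \<and> j \<le> colcount Fs n E t c then 1 else 0::real))
       = (if Q t c then real (colcount Fs n E t c) else 0)"
      by (simp add: sum.If_cases Int_def)
  qed
  also have "\<dots> = (\<Sum>t\<le>T. real (card {v. v < n \<and> Q t (wl Fs n E t v)}))"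
  proof (rule sum.cong[OF refl])
    fix t
    have "(\<Sum>c\<in>Sigma Fs n t. (if Q t c then real (colcount Fs n E t c) else 0))
       = (\<Sum>c\<in>{c\<in>Sigma Fs n t. Q t c}. real (colcount Fs n E t c))"
      using finite_Sigma by (simp add: sum.inter_filter)
    also have "\<dots> = real (card {v. v < n \<and> Q t (wl Fs n E t v)})"
      using colour_sum[OF assms, of Fs t "Q t"] by (metis of_nat_sum)
    finally show "(\<Sum>c\<in>Sigma Fs n t. (if Q t c then real (colcount Fs n E t c) else 0))
       = real (card {v. v < n \<and> Q t (wl Fs n E t v)})" .
  qed
  finally show ?thesis .
qed

lemma cs_weights:
  fixes a :: "'x \<Rightarrow> real"
  assumes "finite A" "sum a A = 1"
  shows "1 / real (card A) \<le> (\<Sum>x\<in>A. (a x)\<^sup>2)"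
proof -
  have ne: "A \<noteq> {}" using assms by auto
  hence c: "real (card A) > 0" using assms(1) by (simp add: card_gt_0_iff)
  have "(sum a A)\<^sup>2 \<le> (\<Sum>x\<in>A. (a x)\<^sup>2) * real (card A)"
    by (rule sum_squared_le_sum_of_squares)
  with assms(2) c show ?thesis by (simp add: field_simps)
qed

lemma sq_sum_orth:
  fixes c :: "'k \<Rightarrow> real"
  assumes "finite K" "\<And>k l. k \<in> K \<Longrightarrow> l \<in> K \<Longrightarrow> k \<noteq> l \<Longrightarrow> v k * v l = 0"
  shows "(\<Sum>k\<in>K. c k * v k)\<^sup>2 = (\<Sum>k\<in>K. (c k)\<^sup>2 * (v k)\<^sup>2)"
proof -
  have "(\<Sum>k\<in>K. c k * v k)\<^sup>2 = (\<Sum>k\<in>K. \<Sum>l\<in>K. (c k * v k) * (c l * v l))"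
    by (simp add: power2_eq_square sum_product)
  also have "\<dots> = (\<Sum>k\<in>K. (c k)\<^sup>2 * (v k)\<^sup>2)"
  proof (rule sum.cong[OF refl])
    fix k assume k: "k \<in> K"
    have "(\<Sum>l\<in>K. (c k * v k) * (c l * v l)) = (\<Sum>l\<in>K. if l = k then (c k)\<^sup>2 * (v k)\<^sup>2 else 0)"
    proof (rule sum.cong[OF refl])
      fix l assume l: "l \<in> K"
      show "(c k * v k) * (c l * v l) = (if l = k then (c k)\<^sup>2 * (v k)\<^sup>2 else 0)"
      proof (cases "l = k")
        case True then show ?thesis by (simp add: power2_eq_square)
      next
        case False
        then have "v k * v l = 0" using assms(2) k l by auto
        then have "(c k * v k) * (c l * v l) = c k * c l * (v k * v l)" by (simp add: algebra_simps)
        then show ?thesis using False \<open>v k * v l = 0\<close> by simp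
      qed
    qed
    also have "\<dots> = (c k)\<^sup>2 * (v k)\<^sup>2" using assms(1) k by (simp add: sum.delta)
    finally show "(\<Sum>l\<in>K. (c k * v k) * (c l * v l)) = (c k)\<^sup>2 * (v k)\<^sup>2" .
  qed
  finally show ?thesis .
qed

lemma greedy_signs:
  fixes y :: "nat \<Rightarrow> 'i \<Rightarrow> real"
  shows "\<exists>s::nat \<Rightarrow> bool. (\<Sum>j\<in>I. (\<Sum>i<m. (if s i then 1 else -1) * y i j)\<^sup>2)
            \<le> (\<Sum>i<m. \<Sum>j\<in>I. (y i j)\<^sup>2)"
proof (induction m)
  case 0 then show ?case by simp
next
  case (Suc m)
  then obtain s where s: "(\<Sum>j\<in>I. (\<Sum>i<m. (if s i then 1 else -1) * y i j)\<^sup>2)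
            \<le> (\<Sum>i<m. \<Sum>j\<in>I. (y i j)\<^sup>2)" by blast
  define S where "S j = (\<Sum>i<m. (if s i then 1 else -1) * y i j)" for j
  define b where "b = ((\<Sum>j\<in>I. S j * y m j) < 0)"
  define s' where "s' = s(m := b)"
  have eq: "(\<Sum>i<Suc m. (if s' i then 1 else -1) * y i j) = S j + (if b then 1 else -1) * y m j" for j
    by (simp add: S_def s'_def)
  have "(\<Sum>j\<in>I. (\<Sum>i<Suc m. (if s' i then 1 else -1) * y i j)\<^sup>2)
      = (\<Sum>j\<in>I. (S j)\<^sup>2) + 2 * (if b then 1 else -1) * (\<Sum>j\<in>I. S j * y m j) + (\<Sum>j\<in>I. (y m j)\<^sup>2)"
    unfolding eq by (cases b) (simp_all add: power2_eq_square algebra_simps sum.distrib sum_distrib_left sum_subtractf sum_negf)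
  also have "\<dots> \<le> (\<Sum>j\<in>I. (S j)\<^sup>2) + (\<Sum>j\<in>I. (y m j)\<^sup>2)"
    by (cases b) (auto simp: b_def)
  also have "\<dots> \<le> (\<Sum>i<Suc m. \<Sum>j\<in>I. (y i j)\<^sup>2)"
    using s by (simp add: S_def)
  finally show ?case by blast
qed

lemma sum_pairs: fixes m :: nat shows "(\<Sum>k<2*m. F k) = (\<Sum>i<m. F (2*i) + F (2*i+1))"
  by (induction m) (simp_all add: sum.distrib add_ac)

lemma enorm_sq: "enorm I x \<le> r \<Longrightarrow> (\<Sum>i\<in>I. (x i)\<^sup>2) \<le> r\<^sup>2"
proof -
  assume a: "enorm I x \<le> r"
  have nn: "0 \<le> (\<Sum>i\<in>I. (x i)\<^sup>2)" by (simp add: sum_nonneg)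
  have "(\<Sum>i\<in>I. (x i)\<^sup>2) = (enorm I x)\<^sup>2" using nn by (simp add: enorm_def)
  also have "\<dots> \<le> r\<^sup>2" using a by (intro power_mono) (auto simp: enorm_def sum_nonneg)
  finally show ?thesis .
qed

lemma enorm_ge: "0 \<le> l \<Longrightarrow> l \<le> enorm I x \<Longrightarrow> l\<^sup>2 \<le> (\<Sum>i\<in>I. (x i)\<^sup>2)"
proof -
  assume "0 \<le> l" "l \<le> enorm I x"
  then have "l\<^sup>2 \<le> (enorm I x)\<^sup>2" by (intro power_mono) auto
  also have "\<dots> = (\<Sum>i\<in>I. (x i)\<^sup>2)" by (simp add: enorm_def sum_nonneg)
  finally show ?thesis .
qed

lemma conv_fin_image_avg:
  assumes "finite K" "card K = m" "m > 0"
  shows "(\<lambda>j. (\<Sum>k\<in>K. e k j) / real m) \<in> conv_fin (e ` K)"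
proof -
  define a where "a v = real (card {k\<in>K. e k = v}) / real m" for v
  have "(\<Sum>v\<in>e ` K. a v) = (\<Sum>v\<in>e ` K. \<Sum>k\<in>{k\<in>K. e k = v}. 1 / real m)"
    by (simp add: a_def)
  also have "\<dots> = (\<Sum>k\<in>K. 1 / real m)" by (rule sum.image_gen[symmetric]) fact
  also have "\<dots> = 1" using assms by simp
  finally have s1: "(\<Sum>v\<in>e ` K. a v) = 1" .
  have "(\<Sum>v\<in>e ` K. a v * v j) = (\<Sum>k\<in>K. e k j) / real m" for j
  proof -
    have "(\<Sum>v\<in>e ` K. a v * v j) = (\<Sum>v\<in>e ` K. \<Sum>k\<in>{k\<in>K. e k = v}. e k j / real m)"
      by (rule sum.cong[OF refl]) (simp add: a_def)
    also have "\<dots> = (\<Sum>k\<in>K. e k j / real m)" by (rule sum.image_gen[symmetric]) fact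
    also have "\<dots> = (\<Sum>k\<in>K. e k j) / real m" by (simp add: sum_divide_distrib)
    finally show ?thesis .
  qed
  then show ?thesis unfolding conv_fin_def using s1
    by (intro CollectI exI[of _ a]) (auto simp: a_def)
qed

lemma shatter_upper:
  fixes emb :: "'a \<Rightarrow> 'i \<Rightarrow> real"
  assumes "finite S" "S \<subseteq> D" "lam > 0" "shatters (Hmargin D I r lam {emb}) S"
  shows "real (card S) \<le> 2 * r\<^sup>2 / lam\<^sup>2 + 1"
proof -
  define m where "m = card S div 2"
  have r2: "0 \<le> r\<^sup>2 / lam\<^sup>2" by simp
  show ?thesis
  proof (cases "m = 0")
    case True
    then have "card S \<le> 1" unfolding m_def by simp
    then have "real (card S) \<le> 1" by simp
    then show ?thesis using r2 by linarith
  next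
    case False
    then have mpos: "m > 0" by simp
    obtain g where g: "bij_betw g {0..<card S} S" using ex_bij_betw_nat_finite[OF assms(1)] by blast
    have m2: "2 * m \<le> card S" unfolding m_def by simp
    define y where "y i j = emb (g (2*i)) j - emb (g (2*i+1)) j" for i j
    obtain s where s: "(\<Sum>j\<in>I. (\<Sum>i<m. (if s i then 1 else -1) * y i j)\<^sup>2)
            \<le> (\<Sum>i<m. \<Sum>j\<in>I. (y i j)\<^sup>2)" using greedy_signs by blast
    define f where "f x = (let k = inv_into {0..<card S} g x in if even k then s (k div 2) else \<not> s (k div 2))" for x
    have fg: "f (g k) = (if even k then s (k div 2) else \<not> s (k div 2))" if "k < card S" for k
    proof -
      have "inv_into {0..<card S} g (g k) = k"
        using g that by (simp add: bij_betw_def inv_into_f_f)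
      then show ?thesis by (simp add: f_def)
    qed
    obtain h where h: "h \<in> Hmargin D I r lam {emb}" "\<forall>x\<in>S. h x = Some (f x)"
      using assms(4) unfolding shatters_def by blast
    define xs where "xs = map g [0..<2*m]"
    have gK: "g k \<in> S" if "k < card S" for k using g that by (auto simp: bij_betw_def)
    have setxs: "set xs = g ` {..<2*m}" by (auto simp: xs_def)
    have xsS: "set xs \<subseteq> S" using gK m2 setxs by auto
    have hm: "\<forall>xs. set xs \<subseteq> D \<and> (\<forall>x\<in>set xs. h x \<noteq> None) \<longrightarrow>
         (\<exists>emb'\<in>{emb}. separable I r lam (map (\<lambda>x. (emb' x, the (h x))) xs))"
      using h(1) unfolding Hmargin_def by blast
    have c1: "set xs \<subseteq> D" using xsS assms(2) by blast
    have c2: "\<forall>x\<in>set xs. h x \<noteq> None" using xsS h(2) by auto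
    have "separable I r lam (map (\<lambda>x. (emb x, the (h x))) xs)"
      using hm[rule_format, OF conjI[OF c1 c2]] by simp
    then have sep: "(\<forall>(x, y)\<in>set (map (\<lambda>x. (emb x, the (h x))) xs). enorm I x \<le> r)"
      "\<forall>p\<in>conv_fin {x. (x, True) \<in> set (map (\<lambda>x. (emb x, the (h x))) xs)}.
         \<forall>q\<in>conv_fin {x. (x, False) \<in> set (map (\<lambda>x. (emb x, the (h x))) xs)}.
         2 * lam \<le> enorm I (\<lambda>i. p i - q i)"
      unfolding separable_def by auto
    have ball: "enorm I (emb (g k)) \<le> r" if "k < 2*m" for k
      using sep(1) that by (auto simp: xs_def)
    define Kp where "Kp = {k\<in>{..<2*m}. f (g k)}"
    define Kn where "Kn = {k\<in>{..<2*m}. \<not> f (g k)}"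
    have setp: "{x. (x, True) \<in> set (map (\<lambda>x. (emb x, the (h x))) xs)} = (\<lambda>k. emb (g k)) ` Kp"
      using h(2) gK m2 by (auto simp: xs_def Kp_def image_iff)
    have setn: "{x. (x, False) \<in> set (map (\<lambda>x. (emb x, the (h x))) xs)} = (\<lambda>k. emb (g k)) ` Kn"
      using h(2) gK m2 by (auto simp: xs_def Kn_def image_iff)
    have cardp: "card Kp = m"
    proof -
      have "card Kp = (\<Sum>k<2*m. if f (g k) then 1 else 0)"
        unfolding Kp_def by (simp add: sum.If_cases Int_def)
      also have "\<dots> = (\<Sum>i<m. (if f (g (2*i)) then 1 else 0) + (if f (g (2*i+1)) then 1 else 0))"
        by (rule sum_pairs)
      also have "\<dots> = (\<Sum>i<m. 1)"
      proof (rule sum.cong[OF refl])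
        fix i assume "i \<in> {..<m}"
        then have "2*i < card S" "2*i+1 < card S" using m2 by auto
        then show "(if f (g (2*i)) then 1 else 0) + (if f (g (2*i+1)) then 1 else 0) = (1::nat)"
          by (simp add: fg)
      qed
      finally show ?thesis by simp
    qed
    have cardn: "card Kn = m"
    proof -
      have "card Kn = (\<Sum>k<2*m. if \<not> f (g k) then 1 else 0)"
        unfolding Kn_def by (simp add: sum.If_cases Int_def)
      also have "\<dots> = (\<Sum>i<m. (if \<not> f (g (2*i)) then 1 else 0) + (if \<not> f (g (2*i+1)) then 1 else 0))"
        by (rule sum_pairs)
      also have "\<dots> = (\<Sum>i<m. 1)"
      proof (rule sum.cong[OF refl])
        fix i assume "i \<in> {..<m}"
        then have "2*i < card S" "2*i+1 < card S" using m2 by auto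
        then show "(if \<not> f (g (2*i)) then 1 else 0) + (if \<not> f (g (2*i+1)) then 1 else 0) = (1::nat)"
          by (simp add: fg)
      qed
      finally show ?thesis by simp
    qed
    define p where "p = (\<lambda>j. (\<Sum>k\<in>Kp. emb (g k) j) / real m)"
    define q where "q = (\<lambda>j. (\<Sum>k\<in>Kn. emb (g k) j) / real m)"
    have pin: "p \<in> conv_fin ((\<lambda>k. emb (g k)) ` Kp)" unfolding p_def
      by (rule conv_fin_image_avg[OF _ cardp mpos]) (simp add: Kp_def)
    have qin: "q \<in> conv_fin ((\<lambda>k. emb (g k)) ` Kn)" unfolding q_def
      by (rule conv_fin_image_avg[OF _ cardn mpos]) (simp add: Kn_def)
    have sepd: "2 * lam \<le> enorm I (\<lambda>j. p j - q j)"
      using sep(2) pin qin unfolding setp setn by blast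
    have diff: "p j - q j = (\<Sum>i<m. (if s i then 1 else -1) * y i j) / real m" for j
    proof -
      have "(\<Sum>k\<in>Kp. emb (g k) j) - (\<Sum>k\<in>Kn. emb (g k) j)
          = (\<Sum>k<2*m. (if f (g k) then 1 else -1) * emb (g k) j)"
      proof -
        have "(\<Sum>k<2*m. (if f (g k) then 1 else -1) * emb (g k) j)
           = (\<Sum>k<2*m. (if f (g k) then emb (g k) j else 0)) - (\<Sum>k<2*m. (if \<not> f (g k) then emb (g k) j else 0))"
          by (simp add: sum_subtractf[symmetric]) (rule sum.cong, auto)
        also have "\<dots> = (\<Sum>k\<in>Kp. emb (g k) j) - (\<Sum>k\<in>Kn. emb (g k) j)"
          unfolding Kp_def Kn_def by (simp only: sum.inter_filter[OF finite_lessThan])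
        finally show ?thesis by simp
      qed
      also have "\<dots> = (\<Sum>i<m. (if f (g (2*i)) then 1 else -1) * emb (g (2*i)) j
            + (if f (g (2*i+1)) then 1 else -1) * emb (g (2*i+1)) j)"
        by (rule sum_pairs)
      also have "\<dots> = (\<Sum>i<m. (if s i then 1 else -1) * y i j)"
      proof (rule sum.cong[OF refl])
        fix i assume "i \<in> {..<m}"
        then have "2*i < card S" "2*i+1 < card S" using m2 by auto
        then show "(if f (g (2*i)) then 1 else -1) * emb (g (2*i)) j
            + (if f (g (2*i+1)) then 1 else -1) * emb (g (2*i+1)) j
            = (if s i then 1 else -1) * y i j"
          by (simp add: fg y_def algebra_simps)
      qed
      finally show ?thesis unfolding p_def q_def by (metis diff_divide_distrib)
    qed
    have "(2 * lam)\<^sup>2 \<le> (\<Sum>j\<in>I. (p j - q j)\<^sup>2)"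
      using enorm_ge[OF _ sepd] assms(3) by simp
    also have "\<dots> = (\<Sum>j\<in>I. (\<Sum>i<m. (if s i then 1 else -1) * y i j)\<^sup>2) / (real m)\<^sup>2"
      unfolding diff power_divide by (rule sum_divide_distrib[symmetric])
    also have "\<dots> \<le> (\<Sum>i<m. \<Sum>j\<in>I. (y i j)\<^sup>2) / (real m)\<^sup>2"
      by (intro divide_right_mono s) simp
    also have "\<dots> \<le> (\<Sum>i<m. 4 * r\<^sup>2) / (real m)\<^sup>2"
    proof (intro divide_right_mono sum_mono)
      fix i assume "i \<in> {..<m}"
      then have i1: "2*i < 2*m" "2*i+1 < 2*m" by auto
      have "(\<Sum>j\<in>I. (y i j)\<^sup>2) \<le> (\<Sum>j\<in>I. 2 * (emb (g (2*i)) j)\<^sup>2 + 2 * (emb (g (2*i+1)) j)\<^sup>2)"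
      proof (rule sum_mono)
        fix j
        have "0 \<le> (emb (g (2*i)) j + emb (g (2*i+1)) j)\<^sup>2" by simp
        then show "(y i j)\<^sup>2 \<le> 2 * (emb (g (2*i)) j)\<^sup>2 + 2 * (emb (g (2*i+1)) j)\<^sup>2"
          unfolding y_def by (simp add: power2_eq_square algebra_simps)
      qed
      also have "\<dots> = 2 * (\<Sum>j\<in>I. (emb (g (2*i)) j)\<^sup>2) + 2 * (\<Sum>j\<in>I. (emb (g (2*i+1)) j)\<^sup>2)"
        by (simp add: sum.distrib sum_distrib_left)
      also have "\<dots> \<le> 2 * r\<^sup>2 + 2 * r\<^sup>2"
        using enorm_sq[OF ball[OF i1(1)]] enorm_sq[OF ball[OF i1(2)]] by linarith
      finally show "(\<Sum>j\<in>I. (y i j)\<^sup>2) \<le> 4 * r\<^sup>2" by simp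
    qed simp
    also have "\<dots> = 4 * r\<^sup>2 / real m" using mpos by (simp add: power2_eq_square)
    finally have "4 * lam\<^sup>2 \<le> 4 * r\<^sup>2 / real m" by (simp add: power_mult_distrib)
    then have "lam\<^sup>2 * real m \<le> r\<^sup>2" using mpos by (simp add: field_simps)
    then have "real m \<le> r\<^sup>2 / lam\<^sup>2" using assms(3) by (simp add: field_simps)
    moreover have "card S \<le> 2 * m + 1" unfolding m_def by simp
    ultimately show ?thesis by simp
  qed
qed

lemma none_in_Hmargin: "(\<lambda>_. None) \<in> Hmargin D I r lam {emb}"
proof -
  have "separable I r lam []" by (simp add: separable_def conv_fin_def)
  then show ?thesis unfolding Hmargin_def by auto
qed

lemma shatters_empty: "shatters (Hmargin D I r lam {emb}) {}"
  unfolding shatters_def using none_in_Hmargin by blast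

lemma vcdim_set_finite:
  assumes "finite D"
  shows "finite {card S | S. S \<subseteq> D \<and> shatters H S}"
proof -
  have "{card S | S. S \<subseteq> D \<and> shatters H S} \<subseteq> card ` Pow D" by auto
  thus ?thesis by (rule finite_subset) (simp add: assms)
qed

lemma vcdim_ge:
  assumes "finite D" "S \<subseteq> D" "shatters H S"
  shows "card S \<le> vcdim D H"
  unfolding vcdim_def using assms by (intro Max_ge vcdim_set_finite) auto

lemma vcdim_upper:
  fixes emb :: "'a \<Rightarrow> 'i \<Rightarrow> real"
  assumes "finite D" "lam > 0"
  shows "real (vcdim D (Hmargin D I r lam {emb})) \<le> 2 * r\<^sup>2 / lam\<^sup>2 + 1"
proof -
  let ?X = "{card S | S. S \<subseteq> D \<and> shatters (Hmargin D I r lam {emb}) S}"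
  have ne: "?X \<noteq> {}" using shatters_empty by blast
  have "vcdim D (Hmargin D I r lam {emb}) \<in> ?X"
    unfolding vcdim_def by (rule Max_in[OF vcdim_set_finite[OF assms(1)] ne])
  then obtain S where S: "S \<subseteq> D" "shatters (Hmargin D I r lam {emb}) S"
     "vcdim D (Hmargin D I r lam {emb}) = card S" by auto
  have "finite S" using S(1) assms(1) finite_subset by auto
  then show ?thesis using shatter_upper[OF _ S(1) assms(2) S(2)] S(3) by simp
qed

lemma conv_fin_image_inj:
  assumes "inj_on e A" "p \<in> conv_fin (e ` A)"
  shows "\<exists>a. (\<forall>x\<in>A. 0 \<le> a x) \<and> sum a A = 1 \<and> p = (\<lambda>i. \<Sum>x\<in>A. a x * e x i)"
proof -
  obtain a where a: "\<forall>v\<in>e ` A. 0 \<le> a v" "(\<Sum>v\<in>e ` A. a v) = 1" "p = (\<lambda>i. \<Sum>v\<in>e ` A. a v * v i)"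
    using assms(2) unfolding conv_fin_def by blast
  have "sum (a \<circ> e) A = 1" using a(2) sum.reindex[OF assms(1), of a] by simp
  moreover have "p = (\<lambda>i. \<Sum>x\<in>A. (a \<circ> e) x * e x i)"
    using a(3) sum.reindex[OF assms(1), of "\<lambda>v. a v * v i" for i] by (auto simp: comp_def)
  moreover have "\<forall>x\<in>A. 0 \<le> (a \<circ> e) x" using a(1) by auto
  ultimately show ?thesis by blast
qed

definition margin_prop :: "'a set \<Rightarrow> 'i set \<Rightarrow> real \<Rightarrow> ('a \<Rightarrow> 'i \<Rightarrow> real) \<Rightarrow> bool" where
  "margin_prop S I lam emb \<longleftrightarrow> (\<forall>A B a b. A \<subseteq> S \<longrightarrow> B \<subseteq> S \<longrightarrow> A \<inter> B = {} \<longrightarrow>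
      (\<forall>x\<in>A. 0 \<le> a x) \<longrightarrow> sum a A = 1 \<longrightarrow> (\<forall>x\<in>B. 0 \<le> b x) \<longrightarrow> sum b B = 1 \<longrightarrow>
      2 * lam \<le> enorm I (\<lambda>i. (\<Sum>x\<in>A. a x * emb x i) - (\<Sum>x\<in>B. b x * emb x i)))"

lemma shatter_lower:
  fixes emb :: "'a \<Rightarrow> 'i \<Rightarrow> real"
  assumes "finite S" "S \<subseteq> D" "lam > 0"
    and ball: "\<forall>x\<in>S. enorm I (emb x) \<le> r"
    and mp: "margin_prop S I lam emb"
  shows "shatters (Hmargin D I r lam {emb}) S"
proof -
  have inj: "inj_on emb S"
  proof (rule inj_onI, rule ccontr)
    fix x y assume xy: "x \<in> S" "y \<in> S" "emb x = emb y" "x \<noteq> y"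
    have "2 * lam \<le> enorm I (\<lambda>i. (\<Sum>z\<in>{x}. 1 * emb z i) - (\<Sum>z\<in>{y}. 1 * emb z i))"
      using mp[unfolded margin_prop_def, rule_format, of "{x}" "{y}" "\<lambda>_. 1" "\<lambda>_. 1"] xy by simp
    also have "\<dots> = 0" using xy(3) by (simp add: enorm_def)
    finally show False using assms(3) by simp
  qed
  show ?thesis unfolding shatters_def
  proof
    fix f :: "'a \<Rightarrow> bool"
    define h where "h x = (if x \<in> S then Some (f x) else None)" for x
    have "h \<in> Hmargin D I r lam {emb}"
      unfolding Hmargin_def
    proof (intro CollectI conjI allI impI)
      fix x assume "x \<notin> D" then show "h x = None" using assms(2) by (auto simp: h_def)
    next
      fix xs assume xs: "set xs \<subseteq> D \<and> (\<forall>x\<in>set xs. h x \<noteq> None)"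
      then have xsS: "set xs \<subseteq> S" by (auto simp: h_def split: if_splits)
      define A where "A = {x\<in>set xs. f x}"
      define B where "B = {x\<in>set xs. \<not> f x}"
      have AS: "A \<subseteq> S" "B \<subseteq> S" "A \<inter> B = {}" using xsS by (auto simp: A_def B_def)
      have sA: "{v. (v, True) \<in> set (map (\<lambda>x. (emb x, the (h x))) xs)} = emb ` A"
        using xsS by (auto simp: A_def h_def image_iff subset_iff)
      have sB: "{v. (v, False) \<in> set (map (\<lambda>x. (emb x, the (h x))) xs)} = emb ` B"
        using xsS by (auto simp: B_def h_def image_iff subset_iff)
      have "separable I r lam (map (\<lambda>x. (emb x, the (h x))) xs)"
        unfolding separable_def sA sB
      proof (intro conjI ballI)
        fix z assume "z \<in> set (map (\<lambda>x. (emb x, the (h x))) xs)"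
        then show "case z of (x, y) \<Rightarrow> enorm I x \<le> r" using ball xsS by auto
      next
        fix p q assume p: "p \<in> conv_fin (emb ` A)" and q: "q \<in> conv_fin (emb ` B)"
        obtain a where a: "\<forall>x\<in>A. 0 \<le> a x" "sum a A = 1" "p = (\<lambda>i. \<Sum>x\<in>A. a x * emb x i)"
          using conv_fin_image_inj[OF inj_on_subset[OF inj AS(1)] p] by blast
        obtain b where b: "\<forall>x\<in>B. 0 \<le> b x" "sum b B = 1" "q = (\<lambda>i. \<Sum>x\<in>B. b x * emb x i)"
          using conv_fin_image_inj[OF inj_on_subset[OF inj AS(2)] q] by blast
        show "2 * lam \<le> enorm I (\<lambda>i. p i - q i)"
          using mp AS a b unfolding margin_prop_def by simp
      qed
      then show "\<exists>emb'\<in>{emb}. separable I r lam (map (\<lambda>x. (emb' x, the (h x))) xs)" by simp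
    qed
    moreover have "\<forall>x\<in>S. h x = Some (f x)" by (simp add: h_def)
    ultimately show "\<exists>h\<in>Hmargin D I r lam {emb}. \<forall>x\<in>S. h x = Some (f x)" by blast
  qed
qed

definition clq :: "nat \<Rightarrow> (nat \<times> nat) set" where
  "clq m = {(a, b). a \<le> m \<and> b \<le> m \<and> a \<noteq> b}"

lemma clq_graph: "m < n \<Longrightarrow> clq m \<in> graphs n"
  by (auto simp: clq_def graphs_def sym_def irrefl_def)

lemma nbr_clq: "nbr (clq m) a = (if a \<le> m then {0..m} - {a} else {})"
  by (auto simp: nbr_def clq_def)

lemma deg_clq: "deg (clq m) a = (if a \<le> m then m else 0)"
  by (simp add: deg_def nbr_clq)

definition cls :: "nat \<Rightarrow> nat \<Rightarrow> (nat \<times> nat) set set" where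
  "cls n m = iso_rel n `` {clq m}"

definition rep :: "(nat \<times> nat) set set \<Rightarrow> (nat \<times> nat) set" where
  "rep X = (SOME E. E \<in> X)"

lemma graph_iso_refl: "graph_iso n E E"
  unfolding graph_iso_def by (rule exI[of _ id]) auto

lemma cls_in_Gn: "m < n \<Longrightarrow> cls n m \<in> Gn n"
  unfolding cls_def Gn_def by (rule quotientI) (rule clq_graph)

lemma rep_cls: assumes "m < n"
  shows "rep (cls n m) \<in> graphs n" "graph_iso n (clq m) (rep (cls n m))"
proof -
  have "clq m \<in> cls n m" using clq_graph[OF assms] graph_iso_refl
    by (auto simp: cls_def iso_rel_def)
  then have "rep (cls n m) \<in> cls n m" unfolding rep_def by (rule someI)
  then show "rep (cls n m) \<in> graphs n" "graph_iso n (clq m) (rep (cls n m))"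
    by (auto simp: cls_def iso_rel_def)
qed

lemma iso_deg:
  assumes "E \<in> graphs n" "E' \<in> graphs n" "graph_iso n E E'"
  shows "\<exists>f. bij_betw f {0..<n} {0..<n} \<and> (\<forall>a<n. deg E' (f a) = deg E a)"
proof -
  obtain f where f: "bij_betw f {0..<n} {0..<n}"
    "\<forall>a<n. \<forall>b<n. (a, b) \<in> E \<longleftrightarrow> (f a, f b) \<in> E'"
    using assms(3) unfolding graph_iso_def by blast
  have "deg E' (f a) = deg E a" if a: "a < n" for a
  proof -
    have "nbr E' (f a) = f ` nbr E a"
    proof
      show "nbr E' (f a) \<subseteq> f ` nbr E a"
      proof
        fix u assume u: "u \<in> nbr E' (f a)"
        then have "u < n" using nbr_sub[OF assms(2), of "f a"] by auto
        then obtain b where b: "b < n" "u = f b" using f(1) unfolding bij_betw_def by (metis atLeastLessThan_iff imageE zero_le)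
        then have "(a, b) \<in> E" using f(2) a u by (auto simp: nbr_def)
        then show "u \<in> f ` nbr E a" using b by (auto simp: nbr_def)
      qed
    next
      show "f ` nbr E a \<subseteq> nbr E' (f a)"
      proof
        fix u assume "u \<in> f ` nbr E a"
        then obtain b where b: "b \<in> nbr E a" "u = f b" by auto
        then have "b < n" using nbr_sub[OF assms(1), of a] by auto
        then show "u \<in> nbr E' (f a)" using f(2) a b by (auto simp: nbr_def)
      qed
    qed
    moreover have "inj_on f (nbr E a)"
      using f(1) nbr_sub[OF assms(1)] unfolding bij_betw_def by (meson inj_on_subset)
    ultimately show ?thesis by (simp add: deg_def card_image)
  qed
  then show ?thesis using f(1) by blast
qed

lemma rep_cls_deg:
  assumes "m < n" "1 \<le> m"
  shows "\<forall>v<n. deg (rep (cls n m)) v = 0 \<or> deg (rep (cls n m)) v = m"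
    "card {v. v < n \<and> deg (rep (cls n m)) v \<noteq> 0} = m + 1"
    "\<exists>v<n. deg (rep (cls n m)) v = m"
proof -
  let ?E = "rep (cls n m)"
  obtain f where f: "bij_betw f {0..<n} {0..<n}" "\<forall>a<n. deg ?E (f a) = deg (clq m) a"
    using iso_deg[OF clq_graph[OF assms(1)] rep_cls[OF assms(1)]] by blast
  have fv: "\<exists>a<n. v = f a" if "v < n" for v
    using f(1) that unfolding bij_betw_def by (metis atLeastLessThan_iff imageE zero_le)
  show "\<forall>v<n. deg ?E v = 0 \<or> deg ?E v = m"
    using fv f(2) deg_clq by fastforce
  have "{v. v < n \<and> deg ?E v \<noteq> 0} = f ` {0..m}"
  proof
    show "{v. v < n \<and> deg ?E v \<noteq> 0} \<subseteq> f ` {0..m}"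
    proof
      fix v assume v: "v \<in> {v. v < n \<and> deg ?E v \<noteq> 0}"
      then obtain a where "a < n" "v = f a" using fv by auto
      then show "v \<in> f ` {0..m}" using v f(2) deg_clq[of m a] by (auto split: if_splits)
    qed
  next
    show "f ` {0..m} \<subseteq> {v. v < n \<and> deg ?E v \<noteq> 0}"
    proof
      fix v assume "v \<in> f ` {0..m}"
      then obtain a where a: "a \<le> m" "v = f a" by auto
      then have "a < n" using assms by simp
      then show "v \<in> {v. v < n \<and> deg ?E v \<noteq> 0}"
        using a f deg_clq[of m a] assms unfolding bij_betw_def by auto
    qed
  qed
  moreover have "inj_on f {0..m}"
  proof (rule inj_on_subset)
    show "inj_on f {0..<n}" using f(1) unfolding bij_betw_def by simp
    show "{0..m} \<subseteq> {0..<n}" using assms(1) by auto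
  qed
  ultimately show "card {v. v < n \<and> deg ?E v \<noteq> 0} = m + 1" by (simp add: card_image)
  show "\<exists>v<n. deg ?E v = m"
  proof -
    have "f 0 < n" using f(1) assms unfolding bij_betw_def by auto
    moreover have "deg ?E (f 0) = m" using f(2) assms deg_clq[of m 0] by auto
    ultimately show ?thesis by blast
  qed
qed

lemma cls_inj: "inj_on (cls n) {m. 1 \<le> m \<and> m < n}"
proof (rule inj_onI)
  fix m m' assume m: "m \<in> {m. 1 \<le> m \<and> m < n}" and m': "m' \<in> {m. 1 \<le> m \<and> m < n}"
    and eq: "cls n m = cls n m'"
  obtain v where v: "v < n" "deg (rep (cls n m)) v = m" using rep_cls_deg(3) m by auto
  have "deg (rep (cls n m')) v = 0 \<or> deg (rep (cls n m')) v = m'" using rep_cls_deg(1) m' v by auto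
  then show "m = m'" using v eq m by auto
qed

lemma sum_if_ge1: "(\<Sum>t\<le>T. (if 1 \<le> t then K else 0::real)) = real T * K"
  by (induction T) (auto simp: algebra_simps)

lemma phi_nz_colour:
  assumes "E \<in> graphs n" "1 \<le> t" "phi_lab Fs n T E (t, c, j) \<noteq> 0"
  shows "\<exists>v<n. dg t c = deg E v"
proof -
  have j: "1 \<le> j" "j \<le> colcount Fs n E t c" using assms(3)
    by (auto simp: phi_lab_def coords_def split: if_splits)
  then have "colcount Fs n E t c \<noteq> 0" by linarith
  then have "{v. v < n \<and> wl Fs n E t v = c} \<noteq> {}" unfolding colcount_def by (metis card.empty)
  then obtain v where "v < n" "wl Fs n E t v = c" by blast
  then show ?thesis using dg_wl[OF assms(1,2)] by metis
qed

locale wsetup =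
  fixes Fs :: "(nat \<times> (nat \<times> nat) set) set" and n d T :: nat
  assumes d1: "1 \<le> d" and d2: "2 * d \<le> n"
begin

definition M where "M = {n - d..<n}"
definition SS where "SS = cls n ` M"
definition mu where "mu X = inv_into M (cls n) X"
definition J where "J = {i \<in> coords Fs n T. 1 \<le> fst i \<and> dg (fst i) (fst (snd i)) \<noteq> 0}"

lemma M_sub: "M \<subseteq> {m. 1 \<le> m \<and> m < n}" using d1 d2 by (auto simp: M_def)

lemma inj_M: "inj_on (cls n) M" using cls_inj M_sub by (rule inj_on_subset)

lemma card_SS: "card SS = d" unfolding SS_def using inj_M d2 by (simp add: card_image M_def)

lemma finite_SS: "finite SS" unfolding SS_def M_def by simp

lemma SS_Gn: "SS \<subseteq> Gn n" unfolding SS_def using M_sub cls_in_Gn by auto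

lemma mu: assumes "X \<in> SS" shows "X = cls n (mu X)" "mu X \<in> M" "1 \<le> mu X" "mu X < n" "n - d \<le> mu X"
proof -
  show "X = cls n (mu X)" using assms unfolding SS_def mu_def by (simp add: f_inv_into_f)
  show m: "mu X \<in> M" using assms unfolding SS_def mu_def by (simp add: inv_into_into)
  then show "1 \<le> mu X" "mu X < n" using M_sub by auto
  show "n - d \<le> mu X" using m by (simp add: M_def)
qed

lemma rep_graph: "X \<in> SS \<Longrightarrow> rep X \<in> graphs n"
  using rep_cls(1)[of "mu X" n] mu[of X] by metis

lemma phiW: "phi_WLOA Fs n T X = phi_lab Fs n T (rep X)"
  by (simp add: phi_WLOA_def rep_def)

lemma orth:
  assumes "X \<in> SS" "Y \<in> SS" "X \<noteq> Y" "i \<in> J"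
  shows "phi_WLOA Fs n T X i * phi_WLOA Fs n T Y i = 0"
proof (rule ccontr)
  assume nz: "phi_WLOA Fs n T X i * phi_WLOA Fs n T Y i \<noteq> 0"
  obtain t c j where i: "i = (t, c, j)" by (cases i) auto
  have t: "1 \<le> t" "dg t c \<noteq> 0" using assms(4) i by (auto simp: J_def)
  obtain v where v: "v < n" "dg t c = deg (rep X) v"
    using phi_nz_colour[where Fs=Fs and T=T and c=c and j=j, OF rep_graph[OF assms(1)] t(1)] nz i by (auto simp: phiW)
  obtain u where u: "u < n" "dg t c = deg (rep Y) u"
    using phi_nz_colour[where Fs=Fs and T=T and c=c and j=j, OF rep_graph[OF assms(2)] t(1)] nz i by (auto simp: phiW)
  have "deg (rep X) v = mu X"
    using rep_cls_deg(1)[of "mu X" n] mu[OF assms(1)] v t by metis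
  moreover have "deg (rep Y) u = mu Y"
    using rep_cls_deg(1)[of "mu Y" n] mu[OF assms(2)] u t by metis
  ultimately have "mu X = mu Y" using v u by simp
  then show False using mu(1)[OF assms(1)] mu(1)[OF assms(2)] assms(3) by metis
qed

lemma mass:
  assumes "X \<in> SS"
  shows "(\<Sum>i\<in>J. (phi_WLOA Fs n T X i)\<^sup>2) = real T * real (mu X + 1)"
proof -
  have "(\<Sum>i\<in>J. (phi_WLOA Fs n T X i)\<^sup>2)
     = (\<Sum>t\<le>T. real (card {v. v < n \<and> (1 \<le> t \<and> dg t (wl Fs n (rep X) t v) \<noteq> 0)}))"
    unfolding J_def phiW
    using phi_sq_sum[OF rep_graph[OF assms], of Fs T "\<lambda>t c. 1 \<le> t \<and> dg t c \<noteq> 0"] by simp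
  also have "\<dots> = (\<Sum>t\<le>T. (if 1 \<le> t then real (mu X + 1) else 0))"
  proof (rule sum.cong[OF refl])
    fix t
    show "real (card {v. v < n \<and> (1 \<le> t \<and> dg t (wl Fs n (rep X) t v) \<noteq> 0)})
       = (if 1 \<le> t then real (mu X + 1) else 0)"
    proof (cases "1 \<le> t")
      case True
      have "{v. v < n \<and> (1 \<le> t \<and> dg t (wl Fs n (rep X) t v) \<noteq> 0)}
          = {v. v < n \<and> deg (rep (cls n (mu X))) v \<noteq> 0}"
        using dg_wl[OF rep_graph[OF assms] True] mu(1)[OF assms] True by metis
      then show ?thesis using rep_cls_deg(2)[of "mu X" n] mu[OF assms] True by simp
    qed simp
  qed
  also have "\<dots> = real T * real (mu X + 1)" by (rule sum_if_ge1)
  finally show ?thesis .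
qed

lemma inv_sum_ge: "0 < x \<Longrightarrow> 0 < y \<Longrightarrow> 4 / (x + y) \<le> 1 / x + 1 / (y::real)"
proof -
  assume xy: "0 < x" "0 < y"
  have "0 \<le> (x - y)\<^sup>2" by simp
  then have "4 * (x * y) \<le> (x + y) * (x + y)" by (simp add: power2_eq_square algebra_simps)
  then show ?thesis using xy by (simp add: field_simps)
qed

lemma phi_margin:
  assumes AB: "A \<subseteq> SS" "B \<subseteq> SS" "A \<inter> B = {}"
    and a: "\<forall>x\<in>A. 0 \<le> a x" "sum a A = 1" and b: "\<forall>x\<in>B. 0 \<le> b x" "sum b B = 1"
  shows "2 * real T * real n / real d \<le>
    (\<Sum>i\<in>coords Fs n T. ((\<Sum>x\<in>A. a x * phi_WLOA Fs n T x i) - (\<Sum>x\<in>B. b x * phi_WLOA Fs n T x i))\<^sup>2)"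
proof -
  let ?phi = "phi_WLOA Fs n T"
  have fA: "finite A" "finite B" using finite_subset[OF AB(1) finite_SS] finite_subset[OF AB(2) finite_SS] by auto
  have neA: "A \<noteq> {}" "B \<noteq> {}" using a(2) b(2) by auto
  define K where "K = A \<union> B"
  define c where "c x = (if x \<in> A then a x else - b x)" for x
  have fK: "finite K" using fA by (simp add: K_def)
  have KS: "K \<subseteq> SS" using AB by (auto simp: K_def)
  have w: "(\<Sum>x\<in>A. a x * ?phi x i) - (\<Sum>x\<in>B. b x * ?phi x i) = (\<Sum>x\<in>K. c x * ?phi x i)" for i
  proof -
    have "(\<Sum>x\<in>K. c x * ?phi x i) = (\<Sum>x\<in>A. c x * ?phi x i) + (\<Sum>x\<in>B. c x * ?phi x i)"
      unfolding K_def by (rule sum.union_disjoint) (use fA AB in auto)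
    also have "\<dots> = (\<Sum>x\<in>A. a x * ?phi x i) - (\<Sum>x\<in>B. b x * ?phi x i)"
    proof -
      have e1: "(\<Sum>x\<in>A. c x * ?phi x i) = (\<Sum>x\<in>A. a x * ?phi x i)"
        by (rule sum.cong) (auto simp: c_def)
      have e2: "(\<Sum>x\<in>B. c x * ?phi x i) = (\<Sum>x\<in>B. - (b x * ?phi x i))"
        using AB(3) by (intro sum.cong) (auto simp: c_def)
      show ?thesis unfolding e1 e2 sum_negf by simp
    qed
    finally show ?thesis by simp
  qed
  have JC: "J \<subseteq> coords Fs n T" by (auto simp: J_def)
  have "(\<Sum>i\<in>J. (\<Sum>x\<in>K. c x * ?phi x i)\<^sup>2) \<le> (\<Sum>i\<in>coords Fs n T. (\<Sum>x\<in>K. c x * ?phi x i)\<^sup>2)"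
    by (rule sum_mono2[OF finite_coords JC]) simp
  moreover have "(\<Sum>i\<in>J. (\<Sum>x\<in>K. c x * ?phi x i)\<^sup>2) = (\<Sum>i\<in>J. \<Sum>x\<in>K. (c x)\<^sup>2 * (?phi x i)\<^sup>2)"
  proof (rule sum.cong[OF refl])
    fix i assume i: "i \<in> J"
    show "(\<Sum>x\<in>K. c x * ?phi x i)\<^sup>2 = (\<Sum>x\<in>K. (c x)\<^sup>2 * (?phi x i)\<^sup>2)"
    proof (rule sq_sum_orth[OF fK])
      fix k l assume "k \<in> K" "l \<in> K" "k \<noteq> l"
      then show "?phi k i * ?phi l i = 0" using orth[of k l i] KS i by blast
    qed
  qed
  moreover have "\<dots> = (\<Sum>x\<in>K. (c x)\<^sup>2 * (\<Sum>i\<in>J. (?phi x i)\<^sup>2))"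
    by (subst sum.swap) (simp add: sum_distrib_left)
  moreover have "\<dots> = (\<Sum>x\<in>K. (c x)\<^sup>2 * (real T * real (mu x + 1)))"
    using mass KS by (intro sum.cong) auto
  moreover have "(\<Sum>x\<in>K. (c x)\<^sup>2 * (real T * real n / 2)) \<le> \<dots>"
  proof (rule sum_mono)
    fix x assume "x \<in> K"
    then have "n - d \<le> mu x" using mu KS by auto
    then have "real n / 2 \<le> real (mu x + 1)" using d2 by linarith
    then have "real T * real n / 2 \<le> real T * real (mu x + 1)"
      using mult_left_mono[of "real n / 2" "real (mu x + 1)" "real T"] by simp
    then show "(c x)\<^sup>2 * (real T * real n / 2) \<le> (c x)\<^sup>2 * (real T * real (mu x + 1))"
      by (rule mult_left_mono) simp
  qed
  moreover have "(\<Sum>x\<in>K. (c x)\<^sup>2 * (real T * real n / 2)) = (real T * real n / 2) * ((\<Sum>x\<in>A. (a x)\<^sup>2) + (\<Sum>x\<in>B. (b x)\<^sup>2))"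
  proof -
    have "(\<Sum>x\<in>K. (c x)\<^sup>2) = (\<Sum>x\<in>A. (c x)\<^sup>2) + (\<Sum>x\<in>B. (c x)\<^sup>2)"
      unfolding K_def by (rule sum.union_disjoint) (use fA AB in auto)
    also have "\<dots> = (\<Sum>x\<in>A. (a x)\<^sup>2) + (\<Sum>x\<in>B. (b x)\<^sup>2)"
      using AB(3) by (auto simp: c_def intro!: sum.cong arg_cong2[where f="(+)"])
    finally have e: "(\<Sum>x\<in>K. (c x)\<^sup>2) = (\<Sum>x\<in>A. (a x)\<^sup>2) + (\<Sum>x\<in>B. (b x)\<^sup>2)" .
    have "(\<Sum>x\<in>K. (c x)\<^sup>2 * (real T * real n / 2)) = (\<Sum>x\<in>K. (c x)\<^sup>2) * (real T * real n / 2)"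
      by (rule sum_distrib_right[symmetric])
    then show ?thesis unfolding e by simp
  qed
  moreover have "4 / real d \<le> (\<Sum>x\<in>A. (a x)\<^sup>2) + (\<Sum>x\<in>B. (b x)\<^sup>2)"
  proof -
    have cA: "0 < real (card A)" "0 < real (card B)" using fA neA by (auto simp: card_gt_0_iff)
    have "card A + card B = card K" unfolding K_def using fA AB(3) by (simp add: card_Un_disjoint)
    also have "\<dots> \<le> d" using card_mono[OF finite_SS KS] card_SS by simp
    finally have "real (card A) + real (card B) \<le> real d" by linarith
    then have "4 / real d \<le> 4 / (real (card A) + real (card B))"
      using cA by (intro divide_left_mono) auto
    also have "\<dots> \<le> 1 / real (card A) + 1 / real (card B)" by (rule inv_sum_ge[OF cA])
    also have "\<dots> \<le> (\<Sum>x\<in>A. (a x)\<^sup>2) + (\<Sum>x\<in>B. (b x)\<^sup>2)"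
      using cs_weights[OF fA(1) a(2)] cs_weights[OF fA(2) b(2)] by linarith
    finally show ?thesis .
  qed
  ultimately have "(real T * real n / 2) * (4 / real d) \<le> (\<Sum>i\<in>coords Fs n T. (\<Sum>x\<in>K. c x * ?phi x i)\<^sup>2)"
    by (smt (verit) mult_left_mono divide_nonneg_nonneg of_nat_0_le_iff mult_nonneg_nonneg)
  then show ?thesis unfolding w by (simp add: field_simps)
qed

end

lemma norm_phi_sq:
  assumes "E \<in> graphs n"
  shows "(\<Sum>i\<in>coords Fs n T. (phi_lab Fs n T E i)\<^sup>2) = real (T + 1) * real n"
  using phi_sq_sum[OF assms, of Fs T "\<lambda>_ _. True"] by simp

lemma lower_i:
  assumes T: "1 \<le> T" and lam: "lam > 0" and d: "1 \<le> d" "2 * d \<le> n"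
    and dl: "4 * lam\<^sup>2 * real d \<le> 2 * real T * real n"
  shows "d \<le> vcdim (Gn n) (Hmargin (Gn n) (coords Fs n T) (sqrt (real (T + 1) * real n)) lam (E_WLOA Fs n T))"
proof -
  interpret wsetup Fs n d T by unfold_locales (use d in auto)
  have sh: "shatters (Hmargin (Gn n) (coords Fs n T) (sqrt (real (T + 1) * real n)) lam {phi_WLOA Fs n T}) SS"
  proof (rule shatter_lower[OF finite_SS SS_Gn lam])
    show "\<forall>x\<in>SS. enorm (coords Fs n T) (phi_WLOA Fs n T x) \<le> sqrt (real (T + 1) * real n)"
      using norm_phi_sq[OF rep_graph] by (simp add: enorm_def phiW)
    show "margin_prop SS (coords Fs n T) lam (phi_WLOA Fs n T)"
      unfolding margin_prop_def
    proof (intro allI impI)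
      fix A B :: "(nat \<times> nat) set set set" and a b :: "(nat \<times> nat) set set \<Rightarrow> real"
      assume h: "A \<subseteq> SS" "B \<subseteq> SS" "A \<inter> B = {}" "\<forall>x\<in>A. 0 \<le> a x" "sum a A = 1"
        "\<forall>x\<in>B. 0 \<le> b x" "sum b B = 1"
      have m: "2 * real T * real n / real d \<le> (\<Sum>i\<in>coords Fs n T. ((\<Sum>x\<in>A. a x * phi_WLOA Fs n T x i) - (\<Sum>x\<in>B. b x * phi_WLOA Fs n T x i))\<^sup>2)"
        by (rule phi_margin[OF h])
      have "(2 * lam)\<^sup>2 \<le> 2 * real T * real n / real d"
        using dl d by (simp add: field_simps power2_eq_square)
      then have "(2 * lam)\<^sup>2 \<le> (\<Sum>i\<in>coords Fs n T. ((\<Sum>x\<in>A. a x * phi_WLOA Fs n T x i) - (\<Sum>x\<in>B. b x * phi_WLOA Fs n T x i))\<^sup>2)"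
        using m by linarith
      then show "2 * lam \<le> enorm (coords Fs n T) (\<lambda>i. (\<Sum>x\<in>A. a x * phi_WLOA Fs n T x i) - (\<Sum>x\<in>B. b x * phi_WLOA Fs n T x i))"
        unfolding enorm_def by (rule real_le_rsqrt)
    qed
  qed
  have "card SS \<le> vcdim (Gn n) (Hmargin (Gn n) (coords Fs n T) (sqrt (real (T + 1) * real n)) lam (E_WLOA Fs n T))"
    unfolding E_WLOA_def by (rule vcdim_ge[OF finite_Gn SS_Gn sh])
  then show ?thesis using card_SS by simp
qed

lemma lower_ii:
  assumes T: "1 \<le> T" and lam: "lam > 0" and d: "1 \<le> d" "2 * d \<le> n"
    and dl: "8 * lam\<^sup>2 * real d \<le> 1"
  shows "d \<le> vcdim (Gn n) (Hmargin (Gn n) (coords Fs n T) 1 lam (E_WLOA_norm Fs n T))"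
proof -
  interpret wsetup Fs n d T by unfold_locales (use d in auto)
  define N where "N = sqrt (real (T + 1) * real n)"
  have npos: "0 < real n" using d by simp
  have N2: "N\<^sup>2 = real (T + 1) * real n" unfolding N_def using npos by simp
  have Npos: "N > 0" unfolding N_def using npos by simp
  have enX: "enorm (coords Fs n T) (phi_WLOA Fs n T X) = N" if "X \<in> SS" for X
    using norm_phi_sq[OF rep_graph[OF that]] by (simp add: enorm_def phiW N_def)
  have pn: "phi_WLOA_norm Fs n T X = (\<lambda>i. phi_WLOA Fs n T X i / N)" if "X \<in> SS" for X
    using enX[OF that] by (simp add: phi_WLOA_norm_def)
  have sh: "shatters (Hmargin (Gn n) (coords Fs n T) 1 lam {phi_WLOA_norm Fs n T}) SS"
  proof (rule shatter_lower[OF finite_SS SS_Gn lam])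
    show "\<forall>x\<in>SS. enorm (coords Fs n T) (phi_WLOA_norm Fs n T x) \<le> 1"
    proof
      fix X assume X: "X \<in> SS"
      have "(\<Sum>i\<in>coords Fs n T. (phi_WLOA Fs n T X i / N)\<^sup>2) = (\<Sum>i\<in>coords Fs n T. (phi_WLOA Fs n T X i)\<^sup>2) / N\<^sup>2"
        by (simp add: power_divide sum_divide_distrib)
      also have "\<dots> = 1" using norm_phi_sq[OF rep_graph[OF X]] N2 Npos npos by (simp add: phiW)
      finally show "enorm (coords Fs n T) (phi_WLOA_norm Fs n T X) \<le> 1"
        by (simp add: pn[OF X] enorm_def)
    qed
    show "margin_prop SS (coords Fs n T) lam (phi_WLOA_norm Fs n T)"
      unfolding margin_prop_def
    proof (intro allI impI)
      fix A B :: "(nat \<times> nat) set set set" and a b :: "(nat \<times> nat) set set \<Rightarrow> real"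
      assume h: "A \<subseteq> SS" "B \<subseteq> SS" "A \<inter> B = {}" "\<forall>x\<in>A. 0 \<le> a x" "sum a A = 1"
        "\<forall>x\<in>B. 0 \<le> b x" "sum b B = 1"
      define w where "w i = (\<Sum>x\<in>A. a x * phi_WLOA Fs n T x i) - (\<Sum>x\<in>B. b x * phi_WLOA Fs n T x i)" for i
      have m: "2 * real T * real n / real d \<le> (\<Sum>i\<in>coords Fs n T. (w i)\<^sup>2)"
        unfolding w_def by (rule phi_margin[OF h])
      have weq: "(\<Sum>x\<in>A. a x * phi_WLOA_norm Fs n T x i) - (\<Sum>x\<in>B. b x * phi_WLOA_norm Fs n T x i) = w i / N" for i
      proof -
        have "(\<Sum>x\<in>A. a x * phi_WLOA_norm Fs n T x i) = (\<Sum>x\<in>A. a x * phi_WLOA Fs n T x i) / N"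
          unfolding sum_divide_distrib using pn h(1) by (intro sum.cong) auto
        moreover have "(\<Sum>x\<in>B. b x * phi_WLOA_norm Fs n T x i) = (\<Sum>x\<in>B. b x * phi_WLOA Fs n T x i) / N"
          unfolding sum_divide_distrib using pn h(2) by (intro sum.cong) auto
        ultimately show ?thesis by (simp add: w_def diff_divide_distrib)
      qed
      have "(\<Sum>i\<in>coords Fs n T. (w i / N)\<^sup>2) = (\<Sum>i\<in>coords Fs n T. (w i)\<^sup>2) / N\<^sup>2"
        by (simp add: power_divide sum_divide_distrib)
      moreover have "2 * real T * real n / real d / N\<^sup>2 \<le> (\<Sum>i\<in>coords Fs n T. (w i)\<^sup>2) / N\<^sup>2"
        using m Npos by (intro divide_right_mono) auto
      moreover have "(2 * lam)\<^sup>2 \<le> 2 * real T * real n / real d / N\<^sup>2"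
      proof -
        have "2 * real T * real n / real d / N\<^sup>2 = 2 * real T / (real d * real (T + 1))"
        proof -
          have hn: "real n \<noteq> 0" "real d \<noteq> 0" "real (T + 1) \<noteq> 0" using npos d by auto
          show ?thesis unfolding N2 using hn(1) by (simp add: divide_divide_eq_left)
        qed
        moreover have key: "(2 * lam)\<^sup>2 * (real d * real (T + 1)) \<le> 2 * real T"
        proof -
          have "(2 * lam)\<^sup>2 * (real d * real (T + 1)) = (4 * lam\<^sup>2 * real d) * real (T + 1)"
            by (simp add: power2_eq_square algebra_simps)
          also have "\<dots> \<le> (1/2) * real (T + 1)"
            using dl by (intro mult_right_mono) auto
          also have "\<dots> \<le> 2 * real T" using T by simp
          finally show ?thesis .
        qed
        moreover have Dpos: "0 < real d * real (T + 1)" using d by simp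
        have "(2 * lam)\<^sup>2 \<le> 2 * real T / (real d * real (T + 1))"
          by (subst pos_le_divide_eq[OF Dpos]) (rule key)
        ultimately show ?thesis by linarith
      qed
      ultimately have "(2 * lam)\<^sup>2 \<le> (\<Sum>i\<in>coords Fs n T. (w i / N)\<^sup>2)" by linarith
      then show "2 * lam \<le> enorm (coords Fs n T) (\<lambda>i. (\<Sum>x\<in>A. a x * phi_WLOA_norm Fs n T x i) - (\<Sum>x\<in>B. b x * phi_WLOA_norm Fs n T x i))"
        unfolding enorm_def weq by (rule real_le_rsqrt)
    qed
  qed
  have "card SS \<le> vcdim (Gn n) (Hmargin (Gn n) (coords Fs n T) 1 lam (E_WLOA_norm Fs n T))"
    unfolding E_WLOA_norm_def by (rule vcdim_ge[OF finite_Gn SS_Gn sh])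
  then show ?thesis using card_SS by simp
qed

lemma floor_facts:
  assumes "0 \<le> (y::real)"
  shows "real (nat \<lfloor>y\<rfloor>) \<le> y" "y - 1 \<le> real (nat \<lfloor>y\<rfloor>)"
proof -
  have e: "real (nat \<lfloor>y\<rfloor>) = of_int \<lfloor>y\<rfloor>" using assms by simp
  show "real (nat \<lfloor>y\<rfloor>) \<le> y" unfolding e by (rule of_int_floor_le)
  show "y - 1 \<le> real (nat \<lfloor>y\<rfloor>)" unfolding e by linarith
qed

theorem corollary7:
  fixes Fs :: "(nat \<times> (nat \<times> nat) set) set"
  assumes "finite Fs"
    and "\<forall>F\<in>Fs. snd F \<in> graphs (fst F)"
  shows
   "(\<exists>c C M. c > 0 \<and> C > 0 \<and>
      (\<forall>(T::nat) (lam::real) (n::nat). T > 0 \<longrightarrow> lam > 0 \<longrightarrow>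
        (let r = sqrt (real (T + 1) * real n) in
          real n \<ge> r\<^sup>2 / lam\<^sup>2 \<longrightarrow> r\<^sup>2 / lam\<^sup>2 \<ge> M \<longrightarrow>
            c * (r\<^sup>2 / lam\<^sup>2) \<le> real (vcdim (Gn n)
                 (Hmargin (Gn n) (coords Fs n T) r lam (E_WLOA Fs n T))) \<and>
            real (vcdim (Gn n) (Hmargin (Gn n) (coords Fs n T) r lam (E_WLOA Fs n T)))
                 \<le> C * (r\<^sup>2 / lam\<^sup>2))))
    \<and>
    (\<exists>c C M. c > 0 \<and> C > 0 \<and>
      (\<forall>(T::nat) (lam::real) (n::nat). T > 0 \<longrightarrow> lam > 0 \<longrightarrow>
        (let r = sqrt (real T / real (T + 1)) in
          real n \<ge> r\<^sup>2 / lam\<^sup>2 \<longrightarrow> 1 / lam\<^sup>2 \<ge> M \<longrightarrow>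
            c * (1 / lam\<^sup>2) \<le> real (vcdim (Gn n)
                 (Hmargin (Gn n) (coords Fs n T) 1 lam (E_WLOA_norm Fs n T))) \<and>
            real (vcdim (Gn n) (Hmargin (Gn n) (coords Fs n T) 1 lam (E_WLOA_norm Fs n T)))
                 \<le> C * (1 / lam\<^sup>2))))"
proof (rule conjI)
  show "\<exists>c C M. c > 0 \<and> C > 0 \<and>
      (\<forall>(T::nat) (lam::real) (n::nat). T > 0 \<longrightarrow> lam > 0 \<longrightarrow>
        (let r = sqrt (real (T + 1) * real n) in
          real n \<ge> r\<^sup>2 / lam\<^sup>2 \<longrightarrow> r\<^sup>2 / lam\<^sup>2 \<ge> M \<longrightarrow>
            c * (r\<^sup>2 / lam\<^sup>2) \<le> real (vcdim (Gn n)
                 (Hmargin (Gn n) (coords Fs n T) r lam (E_WLOA Fs n T))) \<and>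
            real (vcdim (Gn n) (Hmargin (Gn n) (coords Fs n T) r lam (E_WLOA Fs n T)))
                 \<le> C * (r\<^sup>2 / lam\<^sup>2)))"
  proof -
  have main: "(let r = sqrt (real (T + 1) * real n) in
          real n \<ge> r\<^sup>2 / lam\<^sup>2 \<longrightarrow> r\<^sup>2 / lam\<^sup>2 \<ge> 8 \<longrightarrow>
            1/8 * (r\<^sup>2 / lam\<^sup>2) \<le> real (vcdim (Gn n)
                 (Hmargin (Gn n) (coords Fs n T) r lam (E_WLOA Fs n T))) \<and>
            real (vcdim (Gn n) (Hmargin (Gn n) (coords Fs n T) r lam (E_WLOA Fs n T)))
                 \<le> 3 * (r\<^sup>2 / lam\<^sup>2))" if T: "T > 0" and lam: "lam > 0" for T :: nat and lam :: real and n :: nat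
  proof -
    define r where "r = sqrt (real (T + 1) * real n)"
    have r2: "r\<^sup>2 = real (T + 1) * real n" unfolding r_def by simp
    show "let r = sqrt (real (T + 1) * real n) in
          real n \<ge> r\<^sup>2 / lam\<^sup>2 \<longrightarrow> r\<^sup>2 / lam\<^sup>2 \<ge> 8 \<longrightarrow>
            1/8 * (r\<^sup>2 / lam\<^sup>2) \<le> real (vcdim (Gn n)
                 (Hmargin (Gn n) (coords Fs n T) r lam (E_WLOA Fs n T))) \<and>
            real (vcdim (Gn n) (Hmargin (Gn n) (coords Fs n T) r lam (E_WLOA Fs n T)))
                 \<le> 3 * (r\<^sup>2 / lam\<^sup>2)"
      unfolding Let_def r_def[symmetric]
    proof (intro impI)
      assume h1: "real n \<ge> r\<^sup>2 / lam\<^sup>2" and h2: "r\<^sup>2 / lam\<^sup>2 \<ge> 8"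
      define x where "x = r\<^sup>2 / lam\<^sup>2"
      have lam2: "lam\<^sup>2 > 0" using lam by simp
      have xl: "x * lam\<^sup>2 = real (T + 1) * real n" unfolding x_def r2 using lam2 by simp
      have up: "real (vcdim (Gn n) (Hmargin (Gn n) (coords Fs n T) r lam (E_WLOA Fs n T))) \<le> 2 * x + 1"
        unfolding E_WLOA_def x_def using vcdim_upper[OF finite_Gn lam] by (metis times_divide_eq_right)
      define d where "d = nat \<lfloor>x / 4\<rfloor>"
      have dle: "real d \<le> x / 4" "x / 4 - 1 \<le> real d" unfolding d_def using floor_facts[of "x/4"] h2 x_def by auto
      have d1: "1 \<le> d" using dle(2) h2 x_def by simp
      have d2: "2 * d \<le> n" using dle(1) h1 x_def by simp
      have dl: "4 * lam\<^sup>2 * real d \<le> 2 * real T * real n"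
      proof -
        have "4 * lam\<^sup>2 * real d \<le> 4 * lam\<^sup>2 * (x / 4)" using dle(1) lam2 by simp
        also have "\<dots> = real (T + 1) * real n" using xl by (simp add: algebra_simps)
        also have "\<dots> \<le> 2 * real T * real n"
        proof -
          have "real n \<le> real T * real n" using T mult_right_mono[of 1 "real T" "real n"] by simp
          then show ?thesis by (simp add: algebra_simps)
        qed
        finally show ?thesis .
      qed
      have low: "d \<le> vcdim (Gn n) (Hmargin (Gn n) (coords Fs n T) r lam (E_WLOA Fs n T))"
        unfolding r_def by (rule lower_i) (use T lam d1 d2 dl in auto)
      show "1/8 * (r\<^sup>2 / lam\<^sup>2) \<le> real (vcdim (Gn n)
                 (Hmargin (Gn n) (coords Fs n T) r lam (E_WLOA Fs n T))) \<and>
            real (vcdim (Gn n) (Hmargin (Gn n) (coords Fs n T) r lam (E_WLOA Fs n T)))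
                 \<le> 3 * (r\<^sup>2 / lam\<^sup>2)"
        using up low dle h2 unfolding x_def[symmetric] by linarith
    qed
  qed
  show ?thesis
    apply (rule exI[of _ "1/8"], rule exI[of _ 3], rule exI[of _ 8])
    using main by simp
  qed
next
  show "\<exists>c C M. c > 0 \<and> C > 0 \<and>
      (\<forall>(T::nat) (lam::real) (n::nat). T > 0 \<longrightarrow> lam > 0 \<longrightarrow>
        (let r = sqrt (real T / real (T + 1)) in
          real n \<ge> r\<^sup>2 / lam\<^sup>2 \<longrightarrow> 1 / lam\<^sup>2 \<ge> M \<longrightarrow>
            c * (1 / lam\<^sup>2) \<le> real (vcdim (Gn n)
                 (Hmargin (Gn n) (coords Fs n T) 1 lam (E_WLOA_norm Fs n T))) \<and>
            real (vcdim (Gn n) (Hmargin (Gn n) (coords Fs n T) 1 lam (E_WLOA_norm Fs n T)))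
                 \<le> C * (1 / lam\<^sup>2)))"
  proof -
  have main: "(let r = sqrt (real T / real (T + 1)) in
          real n \<ge> r\<^sup>2 / lam\<^sup>2 \<longrightarrow> 1 / lam\<^sup>2 \<ge> 16 \<longrightarrow>
            1/16 * (1 / lam\<^sup>2) \<le> real (vcdim (Gn n)
                 (Hmargin (Gn n) (coords Fs n T) 1 lam (E_WLOA_norm Fs n T))) \<and>
            real (vcdim (Gn n) (Hmargin (Gn n) (coords Fs n T) 1 lam (E_WLOA_norm Fs n T)))
                 \<le> 3 * (1 / lam\<^sup>2))" if T: "T > 0" and lam: "lam > 0" for T :: nat and lam :: real and n :: nat
  proof -
    define r where "r = sqrt (real T / real (T + 1))"
    have r2: "r\<^sup>2 = real T / real (T + 1)" unfolding r_def by simp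
    show "let r = sqrt (real T / real (T + 1)) in
          real n \<ge> r\<^sup>2 / lam\<^sup>2 \<longrightarrow> 1 / lam\<^sup>2 \<ge> 16 \<longrightarrow>
            1/16 * (1 / lam\<^sup>2) \<le> real (vcdim (Gn n)
                 (Hmargin (Gn n) (coords Fs n T) 1 lam (E_WLOA_norm Fs n T))) \<and>
            real (vcdim (Gn n) (Hmargin (Gn n) (coords Fs n T) 1 lam (E_WLOA_norm Fs n T)))
                 \<le> 3 * (1 / lam\<^sup>2)"
      unfolding Let_def r_def[symmetric]
    proof (intro impI)
      assume h1: "real n \<ge> r\<^sup>2 / lam\<^sup>2" and h2: "1 / lam\<^sup>2 \<ge> 16"
      define y where "y = 1 / lam\<^sup>2"
      have lam2: "lam\<^sup>2 > 0" using lam by simp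
      have up: "real (vcdim (Gn n) (Hmargin (Gn n) (coords Fs n T) 1 lam (E_WLOA_norm Fs n T))) \<le> 2 * 1\<^sup>2 / lam\<^sup>2 + 1"
        unfolding E_WLOA_norm_def by (rule vcdim_upper[OF finite_Gn lam])
      then have up': "real (vcdim (Gn n) (Hmargin (Gn n) (coords Fs n T) 1 lam (E_WLOA_norm Fs n T))) \<le> 2 * y + 1"
        unfolding y_def by simp
      have ny: "y / 2 \<le> real n"
      proof -
        have "1 / 2 \<le> real T / real (T + 1)" using T by (simp add: field_simps)
        then have "(1/2) * y \<le> (real T / real (T + 1)) * y"
          using h2 y_def by (intro mult_right_mono) auto
        also have "\<dots> = r\<^sup>2 / lam\<^sup>2" unfolding r2 y_def by simp
        finally show ?thesis using h1 by linarith
      qed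
      define d where "d = nat \<lfloor>y / 8\<rfloor>"
      have dle: "real d \<le> y / 8" "y / 8 - 1 \<le> real d" unfolding d_def using floor_facts[of "y/8"] h2 y_def by auto
      have d1: "1 \<le> d" using dle(2) h2 y_def by simp
      have d2: "2 * d \<le> n" using dle(1) ny by simp
      have dl: "8 * lam\<^sup>2 * real d \<le> 1"
      proof -
        have "8 * lam\<^sup>2 * real d \<le> 8 * lam\<^sup>2 * (y / 8)" using dle(1) lam2 by simp
        also have "\<dots> = 1" unfolding y_def using lam2 by simp
        finally show ?thesis .
      qed
      have low: "d \<le> vcdim (Gn n) (Hmargin (Gn n) (coords Fs n T) 1 lam (E_WLOA_norm Fs n T))"
        by (rule lower_ii) (use T lam d1 d2 dl in auto)
      show "1/16 * (1 / lam\<^sup>2) \<le> real (vcdim (Gn n)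
                 (Hmargin (Gn n) (coords Fs n T) 1 lam (E_WLOA_norm Fs n T))) \<and>
            real (vcdim (Gn n) (Hmargin (Gn n) (coords Fs n T) 1 lam (E_WLOA_norm Fs n T)))
                 \<le> 3 * (1 / lam\<^sup>2)"
        using up' low dle h2 unfolding y_def[symmetric] by linarith
    qed
  qed
  show ?thesis
    apply (rule exI[of _ "1/16"], rule exI[of _ 3], rule exI[of _ 16])
    using main by simp
  qed
qed


end
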